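(* For every deterministic interactive Turing machine $M$ there is a lineage $A_1, A_2, \dots$ of deterministic autopoietic automata (reading a single input stream, each $A_{i+1}$ being the new offspring of $A_i$ and continuing to read the input stream from the position reached by $A_i$) that simulates $M$, i.e., on every input stream the lineage produces the same output stream as $M$.
   Context: A (deterministic) autopoietic automaton $A$ is a finite automaton with state set $Q$, a start state $q_0 \in Q\setminus R$, a subset $R\subseteq Q$ of reproducing-mode states (states in $Q\setminus R$ are transducer-mode states), a special state $q_1\in R$, and a transition partial function $\delta$ (a partial function of (observed symbol, current state), giving a new state, a symbol to write, and a direction). Symbols come from a potentially infinite alphabet $\sigma_1,\sigma_2,\dots$, with $\sigma_i$ encoded in unary by $i$. The automaton has a finite read-only input tape which always contains the code of $A$: a sequence, in arbitrary order, of 5-tuples, one per transition of $\delta$. In reproducing mode (states in $R$) the automaton moves a head on this read-only input tape and writes symbols onto a one-way output tape. In transducer mode (states in $Q\setminus R$) it does not touch the tapes, but reads one symbol at a time from an input buffer connected to an infinite input stream and writes one symbol at a time into an output buffer, producing an output stream. When reproducing mode ends by entering $q_1$, $A$ splits into the old $A$ (same input tape, empty output tape) and the offspring $A'$ whose input tape is the previous output tape and whose output tape is empty; both start in $q_0$ with heads at the left end. If the offspring's input tape is not a proper encoding of a transition function, it stops. The offspring relation defines a tree; a lineage is a path $A_1, A_2,\dots$ in this tree. An interactive Turing machine is a Turing machine that reads one symbol at a time from an input buffer connected to an input stream and writes one symbol at a time to an output buffer, creating an output stream. *)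

theory Defs
  imports Main "HOL-Library.Sublist"
begin

text \<open>Symbols sigma_i are represented by natural numbers i. Head moves:
  direction 1 = left, 2 = right, anything else = stay.\<close>

definition move :: "nat \<Rightarrow> int \<Rightarrow> int" where
  "move d h = (if d = 1 then h - 1 else if d = 2 then h + 1 else h)"

text \<open>Equality of (possibly infinite) output streams, given by the monotone
  chains of finite output prefixes produced after n steps.\<close>

definition same_output_stream :: "(nat \<Rightarrow> nat list) \<Rightarrow> (nat \<Rightarrow> nat list) \<Rightarrow> bool" where
  "same_output_stream f g \<longleftrightarrow> (\<forall>w. (\<exists>n. prefix w (f n)) \<longleftrightarrow> (\<exists>n. prefix w (g n)))"

text \<open>Transition partial function: (observed symbol, state) to
  (new state, written symbol, direction).\<close>

type_synonym aa_trans = "(nat \<times> nat) \<rightharpoonup> (nat \<times> nat \<times> nat)"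

text \<open>Code of an automaton on its read-only tape: tape symbols are 1 (unary
  stroke) and 2 (field terminator); each number n is written in unary as
  1^n 2; a transition is the concatenation of its five fields; the code is
  the concatenation of all transitions, each exactly once, in arbitrary order.\<close>

definition enc_num :: "nat \<Rightarrow> nat list" where
  "enc_num n = replicate n 1 @ [2]"

fun enc_tuple :: "nat \<times> nat \<times> nat \<times> nat \<times> nat \<Rightarrow> nat list" where
  "enc_tuple (a, q, q', b, d) =
     enc_num a @ enc_num q @ enc_num q' @ enc_num b @ enc_num d"

definition encodes :: "nat list \<Rightarrow> aa_trans \<Rightarrow> bool" where
  "encodes c \<delta> \<longleftrightarrow>
     (\<forall>x q' b d. \<delta> x = Some (q', b, d) \<longrightarrow> d \<le> 2) \<and>
     (\<exists>ts. distinct ts \<and>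
           set ts = {(a, q, q', b, d). \<delta> (a, q) = Some (q', b, d)} \<and>
           c = concat (map enc_tuple ts))"

definition proper_code :: "nat list \<Rightarrow> bool" where
  "proper_code c \<longleftrightarrow> (\<exists>\<delta>. encodes c \<delta>)"

definition delta_of :: "nat list \<Rightarrow> aa_trans" where
  "delta_of c = (if proper_code c then (THE \<delta>. encodes c \<delta>) else Map.empty)"

definition q0 :: nat where "q0 = 0"
definition q1 :: nat where "q1 = 1"
definition reproducing :: "nat \<Rightarrow> bool" where "reproducing q \<longleftrightarrow> odd q"

definition read_tape :: "nat list \<Rightarrow> int \<Rightarrow> nat" where
  "read_tape c h = (if 0 \<le> h \<and> h < int (length c) then c ! nat h else 0)"

text \<open>Configuration of the lineage: the current member (its code), its state,
  the input tape head, its output tape, the position reached in the shared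
  input stream, the output stream produced so far, and whether the lineage
  has stopped (offspring with an improper code).\<close>

record lin_cfg =
  code :: "nat list"
  st :: nat
  hpos :: int
  otape :: "nat list"
  ipos :: nat
  outs :: "nat list"
  dead :: bool

text \<open>Splitting: the lineage continues with the offspring, whose input tape is
  the old output tape; it starts in q0 with head at the left end and empty
  output tape, and continues the input stream where the parent stopped.\<close>

definition spawn :: "lin_cfg \<Rightarrow> lin_cfg" where
  "spawn cf = (if proper_code (otape cf)
      then cf\<lparr>code := otape cf, st := q0, hpos := 0, otape := []\<rparr>
      else cf\<lparr>dead := True\<rparr>)"

text \<open>Reproducing mode: read the code tape, move the head, write to
  the one-way output tape (symbol 0 means: write nothing).\<close>

definition lin_step :: "(nat \<Rightarrow> nat) \<Rightarrow> lin_cfg \<Rightarrow> lin_cfg option" where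
  "lin_step s cf =
    (if dead cf then None else
     (let \<delta> = delta_of (code cf); q = st cf in
      if reproducing q then
        (case \<delta> (read_tape (code cf) (hpos cf), q) of
           None \<Rightarrow> None
         | Some (q', b, d) \<Rightarrow>
             (let cf' = cf\<lparr>st := q', hpos := move d (hpos cf),
                           otape := (if b = 0 then otape cf else otape cf @ [b])\<rparr>
              in Some (if q' = q1 then spawn cf' else cf')))
      else
        (case \<delta> (s (ipos cf), q) of
           None \<Rightarrow> None
         | Some (q', b, d) \<Rightarrow>
             (let cf' = cf\<lparr>st := q', ipos := Suc (ipos cf), outs := outs cf @ [b]\<rparr>
              in Some (if q' = q1 then spawn cf' else cf')))))"

fun lin_exec :: "(nat \<Rightarrow> nat) \<Rightarrow> nat \<Rightarrow> lin_cfg \<Rightarrow> lin_cfg" where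
  "lin_exec s 0 cf = cf"
| "lin_exec s (Suc n) cf =
     (case lin_step s (lin_exec s n cf) of None \<Rightarrow> lin_exec s n cf | Some cf' \<Rightarrow> cf')"

definition lin_init :: "nat list \<Rightarrow> lin_cfg" where
  "lin_init c = \<lparr>code = c, st = q0, hpos = 0, otape = [], ipos = 0, outs = [], dead = False\<rparr>"

text \<open>One two-way infinite work tape (blank 0), start state 0. Transition:
  (state, input symbol, scanned symbol) to (new state, output symbol,
  written symbol, direction). A Turing machine has a finite
  transition table.\<close>

type_synonym itm = "(nat \<times> nat \<times> nat) \<rightharpoonup> (nat \<times> nat \<times> nat \<times> nat)"

record itm_cfg =
  mst :: nat
  mtape :: "int \<Rightarrow> nat"
  mhead :: int
  mipos :: nat
  mouts :: "nat list"

definition itm_step :: "itm \<Rightarrow> (nat \<Rightarrow> nat) \<Rightarrow> itm_cfg \<Rightarrow> itm_cfg option" where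
  "itm_step M s c =
    (case M (mst c, s (mipos c), mtape c (mhead c)) of
       None \<Rightarrow> None
     | Some (q', b, w, d) \<Rightarrow>
         Some \<lparr>mst = q', mtape = (mtape c)(mhead c := w), mhead = move d (mhead c),
               mipos = Suc (mipos c), mouts = mouts c @ [b]\<rparr>)"

fun itm_exec :: "itm \<Rightarrow> (nat \<Rightarrow> nat) \<Rightarrow> nat \<Rightarrow> itm_cfg \<Rightarrow> itm_cfg" where
  "itm_exec M s 0 c = c"
| "itm_exec M s (Suc n) c =
     (case itm_step M s (itm_exec M s n c) of None \<Rightarrow> itm_exec M s n c | Some c' \<Rightarrow> c')"

definition itm_init :: itm_cfg where
  "itm_init = \<lparr>mst = 0, mtape = (\<lambda>_. 0), mhead = 0, mipos = 0, mouts = []\<rparr>"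

end

theory Submission
  imports Defs "HOL-Library.Countable"
begin


lemma enc_num_app: "enc_num m @ xs = enc_num n @ ys \<Longrightarrow> m = n \<and> xs = ys"
proof (induction m arbitrary: n)
  case 0 then show ?case by (cases n) (auto simp: enc_num_def)
next
  case (Suc m) then show ?case by (cases n) (auto simp: enc_num_def)
qed

lemma enc_tuple_app: "enc_tuple t @ xs = enc_tuple t' @ ys \<Longrightarrow> t = t' \<and> xs = ys"
proof -
  assume h: "enc_tuple t @ xs = enc_tuple t' @ ys"
  obtain a q q' b d where t: "t = (a,q,q',b,d)" by (cases t) auto
  obtain a2 q2 q2' b2 d2 where t2: "t' = (a2,q2,q2',b2,d2)" by (cases t') auto
  from h show ?thesis unfolding t t2
    by (simp) (metis append.assoc enc_num_app)
qed

lemma enc_tuple_ne: "enc_tuple t \<noteq> []"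
  by (cases t) (auto simp: enc_num_def)

lemma concat_enc_inj: "concat (map enc_tuple ts) = concat (map enc_tuple ts') \<Longrightarrow> ts = ts'"
proof (induction ts arbitrary: ts')
  case Nil then show ?case by (cases ts') (auto simp: enc_tuple_ne)
next
  case (Cons t ts) then show ?case
    by (cases ts') (auto simp: enc_tuple_ne dest: enc_tuple_app)
qed

lemma encodes_unique: "encodes c d1 \<Longrightarrow> encodes c d2 \<Longrightarrow> d1 = d2"
proof -
  assume e1: "encodes c d1" and e2: "encodes c d2"
  from e1 obtain ts1 where t1: "set ts1 = {(a, q, q', b, d). d1 (a, q) = Some (q', b, d)}" "c = concat (map enc_tuple ts1)"
    unfolding encodes_def by blast
  from e2 obtain ts2 where t2: "set ts2 = {(a, q, q', b, d). d2 (a, q) = Some (q', b, d)}" "c = concat (map enc_tuple ts2)"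
    unfolding encodes_def by blast
  have "ts1 = ts2" using t1(2) t2(2) concat_enc_inj by metis
  hence G: "\<And>a q q' b d. d1 (a,q) = Some (q',b,d) \<longleftrightarrow> d2 (a,q) = Some (q',b,d)"
    using t1(1) t2(1) by (metis (mono_tags, lifting) case_prodI mem_Collect_eq old.prod.case)
  show ?thesis
  proof
    fix x show "d1 x = d2 x"
    proof (cases x)
      case (Pair a q)
      show ?thesis
      proof (cases "d1 x")
        case None
        then show ?thesis using G Pair by (cases "d2 x") (auto, metis option.distinct(1))
      next
        case (Some v) then show ?thesis using G Pair by (cases v) auto
      qed
    qed
  qed
qed

lemma delta_of_eq: "encodes c d \<Longrightarrow> delta_of c = d"
  unfolding delta_of_def proper_code_def
  using encodes_unique by (auto intro!: the_equality)

definition F :: "(nat \<Rightarrow> nat) \<Rightarrow> lin_cfg \<Rightarrow> lin_cfg" where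
  "F s cf = (case lin_step s cf of None \<Rightarrow> cf | Some y \<Rightarrow> y)"

lemma lin_exec_pow: "lin_exec s n cf = (F s ^^ n) cf"
  by (induction n) (auto simp: F_def split: option.splits)

lemma lin_exec_add: "lin_exec s (m + n) cf = lin_exec s n (lin_exec s m cf)"
  by (simp add: lin_exec_pow funpow_add funpow_swap1 comp_def)
   (metis comp_apply funpow_add add.commute)

lemma lin_exec_Suc_step: "lin_step s cf = Some cf' \<Longrightarrow> lin_exec s (Suc n) cf = lin_exec s n cf'"
  by (simp add: lin_exec_pow funpow_Suc_right F_def del: funpow.simps)

lemma lin_exec_stall: "lin_step s cf = None \<Longrightarrow> lin_exec s n cf = cf"
  by (induction n) auto




datatype rst = Q1 | Cp nat nat nat | MulL nat nat nat | WoL nat nat nat | CpQR nat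
  | DivR nat nat | DivL nat nat nat | CpQL nat nat nat | MulR nat nat nat nat
  | WoR nat nat nat nat | Wr nat nat nat | S0 | S1 | Sk nat | Bk | Bk2 | Cc

instance rst :: countable by countable_datatype

definition encS :: "rst \<Rightarrow> nat" where
  "encS r = (if r = Q1 then 1 else 2 * to_nat r + 3)"

lemma encS_inj: "inj encS"
  unfolding inj_def encS_def by auto

lemma encS_odd: "odd (encS r)"
  unfolding encS_def by auto

lemma encS_eq1: "encS r = 1 \<longleftrightarrow> r = Q1"
  unfolding encS_def by auto

definition tr :: "nat \<Rightarrow> (nat \<Rightarrow> nat \<Rightarrow> nat list) \<Rightarrow> nat \<Rightarrow> rst \<Rightarrow> (rst \<times> nat \<times> nat) option" where
 "tr K ts a r = (case r of
   Q1 \<Rightarrow> None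
 | Cp k p x \<Rightarrow> if a = 1 then Some (Cp k p x, 1, 2) else if a = 2 then Some (if k \<le> 1 then Wr p x 0 else Cp (k-1) p x, 2, 2) else None
 | MulL i p w \<Rightarrow> if a = 1 then Some (if i+1 < K then (MulL (i+1) p w, 1, 0) else (MulL 0 p w, 1, 2)) else if a = 2 then Some (WoL 0 p w, 0, 0) else None
 | WoL k p w \<Rightarrow> if a = 2 then Some (if k < w then (WoL (k+1) p w, 1, 0) else (CpQR p, 2, 2)) else None
 | CpQR p \<Rightarrow> if a = 1 then Some (CpQR p, 1, 2) else if a = 2 then Some (DivR 0 p, 2, 2) else None
 | DivR j p \<Rightarrow> if a = 1 then Some (DivR ((j+1) mod K) p, if j+1 = K then 1 else 0, 2) else if a = 2 then Some (Cp 2 p j, 2, 2) else None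
 | DivL j p w \<Rightarrow> if a = 1 then Some (DivL ((j+1) mod K) p w, if j+1 = K then 1 else 0, 2) else if a = 2 then Some (CpQL p w j, 2, 2) else None
 | CpQL p w j \<Rightarrow> if a = 1 then Some (CpQL p w j, 1, 2) else if a = 2 then Some (MulR 0 p w j, 2, 2) else None
 | MulR i p w j \<Rightarrow> if a = 1 then Some (if i+1 < K then (MulR (i+1) p w j, 1, 0) else (MulR 0 p w j, 1, 2)) else if a = 2 then Some (WoR 0 p w j, 0, 0) else None
 | WoR k p w j \<Rightarrow> if a = 2 then Some (if k < w then (WoR (k+1) p w j, 1, 0) else (Cp 2 p j, 2, 2)) else None
 | Wr p x i \<Rightarrow> if a = 1 \<or> a = 2 then Some (if i < length (ts p x) then (Wr p x (i+1), ts p x ! i, 0) else (S0, 0, 0)) else None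
 | S0 \<Rightarrow> if a = 1 then Some (S0, 0, 2) else if a = 2 then Some (S1, 0, 2) else None
 | S1 \<Rightarrow> if a = 2 then Some (Sk 3, 0, 2) else if a = 1 then Some (Bk, 0, 1) else None
 | Sk n \<Rightarrow> if a = 1 then Some (Sk n, 0, 2) else if a = 2 then Some (if n \<le> 1 then S0 else Sk (n-1), 0, 2) else None
 | Bk \<Rightarrow> if a = 2 then Some (Bk2, 0, 1) else None
 | Bk2 \<Rightarrow> if a = 1 then Some (Bk2, 0, 1) else if a = 2 then Some (Cc, 0, 2) else None
 | Cc \<Rightarrow> if a = 1 then Some (Cc, 1, 2) else if a = 2 then Some (Cc, 2, 2) else if a = 0 then Some (Q1, 0, 0) else None)"

lemma tr_dom: "tr K ts a r = Some v \<Longrightarrow> a \<le> 2 \<and> snd (snd v) \<le> 2"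
  unfolding tr_def by (auto split: rst.splits if_splits)

locale sim =
  fixes M :: itm
  assumes fin: "finite (dom M)"
begin

definition K :: nat where "K = Suc (Max (insert 0 ((\<lambda>(p,b,w,d). w) ` ran M)))"
definition PS0 :: "nat set" where "PS0 = insert 0 ((\<lambda>(p,b,w,d). p) ` ran M)"

definition start :: "nat \<Rightarrow> nat \<Rightarrow> nat \<Rightarrow> rst" where
  "start p w d = (if d = 2 then MulL 0 p w else if d = 1 then DivL 0 p w else Cp 5 p w)"

definition Adom :: "nat \<Rightarrow> nat \<Rightarrow> nat set" where "Adom p x = {a. M (p,a,x) \<noteq> None}"

definition tabd :: "nat \<Rightarrow> nat \<Rightarrow> nat \<Rightarrow> (nat \<times> nat \<times> nat) option" where
  "tabd p x a = (case M (p,a,x) of None \<Rightarrow> None | Some (p',b,w,d) \<Rightarrow> Some (encS (start p' w d), b, 0))"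

definition tabent :: "nat \<Rightarrow> nat \<Rightarrow> nat \<Rightarrow> nat \<times> nat \<times> nat \<times> nat \<times> nat" where
  "tabent p x a = (case the (tabd p x a) of (q',b,d) \<Rightarrow> (a, 0, q', b, d))"

definition tab :: "nat \<Rightarrow> nat \<Rightarrow> (nat \<times> nat \<times> nat \<times> nat \<times> nat) list" where
  "tab p x = map (tabent p x) (sorted_list_of_set (Adom p x))"

definition tabstr :: "nat \<Rightarrow> nat \<Rightarrow> nat list" where
  "tabstr p x = concat (map enc_tuple (tab p x))"

definition okS :: "rst \<Rightarrow> bool" where
 "okS r = (case r of Q1 \<Rightarrow> False
   | Cp k p x \<Rightarrow> k \<le> 5 \<and> p \<in> PS0 \<and> x < K
   | MulL i p w \<Rightarrow> i < K \<and> p \<in> PS0 \<and> w < K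
   | WoL i p w \<Rightarrow> i \<le> K \<and> p \<in> PS0 \<and> w < K
   | CpQR p \<Rightarrow> p \<in> PS0
   | DivR j p \<Rightarrow> j < K \<and> p \<in> PS0
   | DivL j p w \<Rightarrow> j < K \<and> p \<in> PS0 \<and> w < K
   | CpQL p w j \<Rightarrow> p \<in> PS0 \<and> w < K \<and> j < K
   | MulR i p w j \<Rightarrow> i < K \<and> p \<in> PS0 \<and> w < K \<and> j < K
   | WoR i p w j \<Rightarrow> i \<le> K \<and> p \<in> PS0 \<and> w < K \<and> j < K
   | Wr p x i \<Rightarrow> p \<in> PS0 \<and> x < K \<and> i \<le> length (tabstr p x)
   | S0 \<Rightarrow> True | S1 \<Rightarrow> True | Sk n \<Rightarrow> n \<le> 3 | Bk \<Rightarrow> True | Bk2 \<Rightarrow> True | Cc \<Rightarrow> True)"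

definition Sts :: "rst set" where "Sts = {r. okS r}"

lemma finite_PS0: "finite PS0"
  unfolding PS0_def using fin by (simp add: finite_ran)

lemma finite_Sts: "finite Sts"
proof -
  let ?A = "{..5::nat} \<times> PS0 \<times> {..<K}"
  have "Sts \<subseteq> (\<lambda>(k,p,x). Cp k p x) ` ?A
    \<union> (\<lambda>(i,p,w). MulL i p w) ` ({..<K} \<times> PS0 \<times> {..<K})
    \<union> (\<lambda>(i,p,w). WoL i p w) ` ({..K} \<times> PS0 \<times> {..<K})
    \<union> CpQR ` PS0
    \<union> (\<lambda>(j,p). DivR j p) ` ({..<K} \<times> PS0)
    \<union> (\<lambda>(j,p,w). DivL j p w) ` ({..<K} \<times> PS0 \<times> {..<K})
    \<union> (\<lambda>(p,w,j). CpQL p w j) ` (PS0 \<times> {..<K} \<times> {..<K})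
    \<union> (\<lambda>(i,p,w,j). MulR i p w j) ` ({..<K} \<times> PS0 \<times> {..<K} \<times> {..<K})
    \<union> (\<lambda>(i,p,w,j). WoR i p w j) ` ({..K} \<times> PS0 \<times> {..<K} \<times> {..<K})
    \<union> (\<Union>(p,x)\<in>PS0 \<times> {..<K}. Wr p x ` {..length (tabstr p x)})
    \<union> {S0, S1, Sk 0, Sk 1, Sk 2, Sk 3, Bk, Bk2, Cc}" (is "_ \<subseteq> ?B")
    unfolding Sts_def okS_def
    by (rule subsetI) (auto simp: image_iff split: rst.splits)
  moreover have "finite ?B" using finite_PS0 by auto
  ultimately show ?thesis by (rule finite_subset)
qed

definition dP :: "aa_trans" where
  "dP = (\<lambda>(a,q). if q \<in> encS ` Sts then map_option (\<lambda>(r,b,d). (encS r, b, d)) (tr K tabstr a (inv encS q)) else None)"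

definition graph :: "aa_trans \<Rightarrow> (nat \<times> nat \<times> nat \<times> nat \<times> nat) set" where
  "graph d = {(a, q, q', b, dd). d (a, q) = Some (q', b, dd)}"

lemma dP_dom: "dP (a,q) = Some (q',b,d) \<Longrightarrow> a \<le> 2 \<and> d \<le> 2 \<and> q \<in> encS ` Sts \<and> odd q"
  unfolding dP_def by (auto split: if_splits dest!: tr_dom simp: encS_odd)

lemma finite_graph_dP: "finite (graph dP)"
proof -
  have "graph dP \<subseteq> (\<lambda>(a,q). case the (dP (a,q)) of (q',b,d) \<Rightarrow> (a,q,q',b,d)) ` ({..2} \<times> encS ` Sts)" (is "_ \<subseteq> ?R")
  proof
    fix t assume "t \<in> graph dP"
    then obtain a q q' b d where t: "t = (a,q,q',b,d)" and h: "dP (a,q) = Some (q',b,d)"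
      unfolding graph_def by auto
    show "t \<in> ?R"
      using h dP_dom[OF h] unfolding t by (auto intro!: image_eqI[where x="(a,q)"])
  qed
  moreover have "finite ?R" using finite_Sts by auto
  ultimately show ?thesis by (rule finite_subset)
qed

definition Pts :: "(nat \<times> nat \<times> nat \<times> nat \<times> nat) list" where
  "Pts = (SOME ts. distinct ts \<and> set ts = graph dP)"

lemma Pts: "distinct Pts" "set Pts = graph dP"
proof -
  obtain ts where "distinct ts \<and> set ts = graph dP"
    using finite_distinct_list[OF finite_graph_dP] by metis
  then have "distinct Pts \<and> set Pts = graph dP" unfolding Pts_def by (rule someI)
  then show "distinct Pts" "set Pts = graph dP" by auto
qed

definition Pstr :: "nat list" where "Pstr = concat (map enc_tuple Pts)"

definition codeC :: "nat \<Rightarrow> nat \<Rightarrow> nat \<Rightarrow> nat \<Rightarrow> nat list" where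
  "codeC L R p x = enc_tuple (L,2,R,0,0) @ tabstr p x @ Pstr"

definition dC :: "nat \<Rightarrow> nat \<Rightarrow> nat \<Rightarrow> nat \<Rightarrow> aa_trans" where
  "dC L R p x = (\<lambda>(a,q). if q = 2 then (if a = L then Some (R,0,0) else None)
      else if q = 0 then tabd p x a else dP (a,q))"

lemma finite_Adom: "finite (Adom p x)"
proof -
  have "Adom p x \<subseteq> (\<lambda>(p,a,x). a) ` dom M" unfolding Adom_def by (auto intro!: image_eqI[where x="(p,_,x)"])
  then show ?thesis using fin finite_subset by blast
qed

lemma set_tab: "set (tab p x) = {t. \<exists>a q' b d. t = (a,0::nat,q',b,d) \<and> tabd p x a = Some (q',b,d)}"
proof -
  have e: "set (tab p x) = tabent p x ` Adom p x" using finite_Adom by (simp add: tab_def)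
  show ?thesis unfolding e
  proof (intro equalityI subsetI)
    fix t assume "t \<in> tabent p x ` Adom p x"
    then obtain a where a: "a \<in> Adom p x" "t = tabent p x a" by auto
    then obtain v where v: "tabd p x a = Some v" by (auto simp: Adom_def tabd_def split: option.splits)
    then show "t \<in> {t. \<exists>a q' b d. t = (a,0::nat,q',b,d) \<and> tabd p x a = Some (q',b,d)}"
      using a by (cases v) (auto simp: tabent_def)
  next
    fix t assume "t \<in> {t. \<exists>a q' b d. t = (a,0::nat,q',b,d) \<and> tabd p x a = Some (q',b,d)}"
    then obtain a q' b d where t: "t = (a,0::nat,q',b,d)" "tabd p x a = Some (q',b,d)" by auto
    then have "a \<in> Adom p x" by (auto simp: Adom_def tabd_def split: option.splits)
    moreover have "t = tabent p x a" using t by (simp add: tabent_def)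
    ultimately show "t \<in> tabent p x ` Adom p x" by blast
  qed
qed

lemma dP_even: "even q \<Longrightarrow> dP (a,q) = None"
  using dP_dom by (cases "dP (a,q)") auto

lemma distinct_tab: "distinct (tab p x)"
  unfolding tab_def
  by (rule distinct_map[THEN iffD2]) (auto simp: inj_on_def tabent_def split: prod.splits)

lemma encodes_codeC: "encodes (codeC L R p x) (dC L R p x)"
  unfolding encodes_def
proof (intro conjI)
  show "\<forall>xa q' b d. dC L R p x xa = Some (q', b, d) \<longrightarrow> d \<le> 2"
    by (auto simp: dC_def tabd_def split: if_splits option.splits dest: dP_dom)
  let ?ts = "(L,2,R,0,0) # tab p x @ Pts"
  have "distinct ?ts"
    using distinct_tab Pts set_tab by (auto dest: dP_dom simp: graph_def dP_even)
  moreover have "set ?ts = {(a, q, q', b, d). dC L R p x (a, q) = Some (q', b, d)}"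
    using Pts set_tab by (auto dest: dP_dom simp: graph_def dC_def dP_even split: if_splits)
  moreover have "codeC L R p x = concat (map enc_tuple ?ts)"
    unfolding codeC_def tabstr_def Pstr_def by simp
  ultimately show "\<exists>ts. distinct ts \<and> set ts = {(a, q, q', b, d). dC L R p x (a, q) = Some (q', b, d)} \<and>
        codeC L R p x = concat (map enc_tuple ts)" by blast
qed

lemma delta_codeC: "delta_of (codeC L R p x) = dC L R p x"
  by (rule delta_of_eq[OF encodes_codeC])

lemma proper_codeC: "proper_code (codeC L R p x)"
  using encodes_codeC proper_code_def by blast

end



definition Rc :: "lin_cfg \<Rightarrow> nat \<Rightarrow> int \<Rightarrow> nat list \<Rightarrow> lin_cfg" where
  "Rc cf q h ot = cf\<lparr>st := q, hpos := h, otape := ot\<rparr>"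

lemma Rc_simps[simp]: "code (Rc cf q h ot) = code cf" "dead (Rc cf q h ot) = dead cf"
  "st (Rc cf q h ot) = q" "hpos (Rc cf q h ot) = h" "otape (Rc cf q h ot) = ot"
  "outs (Rc cf q h ot) = outs cf" "ipos (Rc cf q h ot) = ipos cf"
  by (simp_all add: Rc_def)

lemma read_app: "i < length u \<Longrightarrow> read_tape (pre @ u @ post) (int (length pre) + int i) = u ! i"
  unfolding read_tape_def by (auto simp: nth_append simp flip: of_nat_add)

lemma read_end: "read_tape c (int (length c)) = 0"
  unfolding read_tape_def by auto

context sim begin

lemma K_pos: "0 < K" by (simp add: K_def)

lemma dC_odd: "dC L R p x (a, encS r) = (if okS r then map_option (\<lambda>(r',b,d). (encS r', b, d)) (tr K tabstr a r) else None)"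
proof -
  have ot: "encS r \<noteq> 0" "encS r \<noteq> 2" using encS_odd[of r] by (auto elim: oddE)
  have "encS r \<in> encS ` Sts \<longleftrightarrow> okS r" using encS_inj by (auto simp: Sts_def inj_eq)
  then show ?thesis using ot by (simp add: dC_def dP_def inv_f_f[OF encS_inj])
qed

end

locale run = sim +
  fixes cf :: lin_cfg and L R p x :: nat and s :: "nat \<Rightarrow> nat"
  assumes cd: "code cf = codeC L R p x" and nd: "\<not> dead cf"
begin

abbreviation rd where "rd h \<equiv> read_tape (code cf) h"

lemma rstep:
  assumes ok: "okS r" and t: "tr K tabstr (rd h) r = Some (r', b, d)" and nq: "r' \<noteq> Q1"
  shows "lin_step s (Rc cf (encS r) h ot) = Some (Rc cf (encS r') (move d h) (if b = 0 then ot else ot @ [b]))"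
proof -
  have "delta_of (code cf) (rd h, encS r) = Some (encS r', b, d)"
    using ok t by (simp add: cd delta_codeC dC_odd)
  moreover have "encS r' \<noteq> q1" using nq encS_eq1 by (simp add: q1_def)
  ultimately show ?thesis using nd encS_odd[of r]
    by (simp add: lin_step_def reproducing_def Let_def Rc_def)
qed

lemma step1:
  assumes "okS r" "tr K tabstr (rd h) r = Some (r', b, d)" "r' \<noteq> Q1"
  shows "lin_exec s (Suc n) (Rc cf (encS r) h ot) = lin_exec s n (Rc cf (encS r') (move d h) (if b = 0 then ot else ot @ [b]))"
  using rstep[OF assms] by (rule lin_exec_Suc_step)

lemma loopR:
  assumes ok: "okS r" and t: "tr K tabstr 1 r = Some (r, b, 2)"
  shows "(\<forall>i<m. rd (h + int i) = 1) \<Longrightarrow>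
     lin_exec s m (Rc cf (encS r) h ot) = Rc cf (encS r) (h + int m) (ot @ (if b = 0 then [] else replicate m b))"
proof (induction m arbitrary: h ot)
  case 0 then show ?case by simp
next
  case (Suc m)
  have r1: "rd h = 1" using Suc.prems[rule_format, of 0] by simp
  have nq: "r \<noteq> Q1" using ok by (auto simp: okS_def)
  have "lin_exec s (Suc m) (Rc cf (encS r) h ot) = lin_exec s m (Rc cf (encS r) (h + 1) (if b = 0 then ot else ot @ [b]))"
    using step1[OF ok _ nq] t r1 by (simp add: move_def)
  also have "\<dots> = Rc cf (encS r) (h + 1 + int m) ((if b = 0 then ot else ot @ [b]) @ (if b = 0 then [] else replicate m b))"
    using Suc.prems by (intro Suc.IH) (auto simp: add.assoc)
  finally show ?case by (auto simp: replicate_append_same[symmetric] add.assoc)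
qed

lemma loopL:
  assumes ok: "okS r" and t: "tr K tabstr 1 r = Some (r, 0, 1)"
  shows "(\<forall>i<m. rd (h - int i) = 1) \<Longrightarrow>
     lin_exec s m (Rc cf (encS r) h ot) = Rc cf (encS r) (h - int m) ot"
proof (induction m arbitrary: h)
  case 0 then show ?case by simp
next
  case (Suc m)
  have r1: "rd h = 1" using Suc.prems[rule_format, of 0] by simp
  have nq: "r \<noteq> Q1" using ok by (auto simp: okS_def)
  have "lin_exec s (Suc m) (Rc cf (encS r) h ot) = lin_exec s m (Rc cf (encS r) (h - 1) ot)"
    using step1[OF ok _ nq] t r1 by (simp add: move_def)
  also have "\<dots> = Rc cf (encS r) (h - 1 - int m) ot"
    using Suc.prems by (intro Suc.IH) (auto simp: algebra_simps)
  finally show ?case by (simp add: algebra_simps)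
qed

end



context run begin

lemma mul_inner:
  assumes fam: "\<And>i. i < K \<Longrightarrow> okS (f i) \<and> tr K tabstr 1 (f i) = Some (if i+1 < K then (f (i+1), 1, 0) else (f 0, 1, 2))"
    and r1: "rd h = 1"
  shows "i < K \<Longrightarrow> lin_exec s (K - i) (Rc cf (encS (f i)) h ot) = Rc cf (encS (f 0)) (h + 1) (ot @ replicate (K - i) 1)"
proof (induction "K - i" arbitrary: i ot)
  case 0 then show ?case by simp
next
  case (Suc n)
  have ok: "okS (f i)" using fam Suc.prems by blast
  have nq: "\<And>j. j < K \<Longrightarrow> f j \<noteq> Q1" using fam by (fastforce simp: okS_def)
  show ?case
  proof (cases "i + 1 < K")
    case True
    have e: "K - i = Suc (K - (i+1))" using True by simp
    have nn: "n = K - (i+1)" using Suc.hyps(2) by arith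
    have "lin_exec s (Suc (K - (i+1))) (Rc cf (encS (f i)) h ot) = lin_exec s (K - (i+1)) (Rc cf (encS (f (i+1))) h (ot @ [1]))"
      using step1[OF ok, where r'="f (i+1)" and b=1 and d=0] fam[OF Suc.prems] True r1 nq[of "i+1"] by (simp add: move_def)
    also have "\<dots> = Rc cf (encS (f 0)) (h + 1) ((ot @ [1]) @ replicate (K - (i+1)) 1)"
      using Suc.hyps(1)[of "i+1" "ot @ [1]"] nn True by simp
    finally show ?thesis unfolding e by simp
  next
    case False
    then have ki: "K - i = Suc 0" using Suc.prems by auto
    have t: "tr K tabstr (rd h) (f i) = Some (f 0, 1, 2)" using fam[OF Suc.prems] False r1 by simp
    show ?thesis unfolding ki using step1[OF ok t nq[OF K_pos], of 0 ot] by (simp add: move_def)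
  qed
qed

lemma mul_loop:
  assumes fam: "\<And>i. i < K \<Longrightarrow> okS (f i) \<and> tr K tabstr 1 (f i) = Some (if i+1 < K then (f (i+1), 1, 0) else (f 0, 1, 2))"
  shows "(\<forall>i<m. rd (h + int i) = 1) \<Longrightarrow>
     lin_exec s (K * m) (Rc cf (encS (f 0)) h ot) = Rc cf (encS (f 0)) (h + int m) (ot @ replicate (K * m) 1)"
proof (induction m arbitrary: h ot)
  case 0 then show ?case by simp
next
  case (Suc m)
  have r1: "rd h = 1" using Suc.prems[rule_format, of 0] by simp
  have "lin_exec s (K * Suc m) (Rc cf (encS (f 0)) h ot) = lin_exec s (K * m) (lin_exec s K (Rc cf (encS (f 0)) h ot))"
    by (simp add: lin_exec_add)
  also have "lin_exec s K (Rc cf (encS (f 0)) h ot) = Rc cf (encS (f 0)) (h + 1) (ot @ replicate K 1)"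
    using mul_inner[OF fam r1, of 0 ot] K_pos by simp
  also have "lin_exec s (K * m) \<dots> = Rc cf (encS (f 0)) (h + 1 + int m) ((ot @ replicate K 1) @ replicate (K * m) 1)"
    using Suc.prems by (intro Suc.IH) (auto simp: add.assoc)
  finally show ?case by (simp add: replicate_add add.assoc)
qed

lemma div_loop:
  assumes fam: "\<And>j. j < K \<Longrightarrow> okS (g j) \<and> tr K tabstr 1 (g j) = Some (g ((j+1) mod K), if j+1 = K then 1 else 0, 2)"
  shows "j0 < K \<Longrightarrow> (\<forall>i<m. rd (h + int i) = 1) \<Longrightarrow>
     lin_exec s m (Rc cf (encS (g j0)) h ot) = Rc cf (encS (g ((j0 + m) mod K))) (h + int m) (ot @ replicate ((j0 + m) div K) 1)"
proof (induction m arbitrary: j0 h ot)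
  case 0 then show ?case by simp
next
  case (Suc m)
  have r1: "rd h = 1" using Suc.prems(2)[rule_format, of 0] by simp
  have ok: "okS (g j0)" using fam Suc.prems(1) by blast
  have nq: "g ((j0+1) mod K) \<noteq> Q1" using fam[of "(j0+1) mod K"] K_pos by (auto simp: okS_def)
  let ?ot1 = "if j0 + 1 = K then ot @ [1] else ot"
  have "lin_exec s (Suc m) (Rc cf (encS (g j0)) h ot) = lin_exec s m (Rc cf (encS (g ((j0+1) mod K))) (h + 1) ?ot1)"
    using step1[OF ok, where r'="g ((j0+1) mod K)" and b="if j0 + 1 = K then 1 else 0" and d=2 and n=m and h=h and ot=ot] fam[OF Suc.prems(1)] r1 nq
    by (simp add: move_def)
  also have "\<dots> = Rc cf (encS (g (((j0+1) mod K + m) mod K))) (h + 1 + int m) (?ot1 @ replicate (((j0+1) mod K + m) div K) 1)"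
    using Suc.prems K_pos by (intro Suc.IH) (auto simp: add.assoc)
  also have "((j0+1) mod K + m) mod K = (j0 + Suc m) mod K" by (simp add: mod_add_left_eq)
  also have "?ot1 @ replicate (((j0+1) mod K + m) div K) 1 = ot @ replicate ((j0 + Suc m) div K) 1"
  proof (cases "j0 + 1 = K")
    case True
    have e: "j0 + Suc m = m + K" using True by simp
    have "(j0 + Suc m) div K = Suc (m div K)" unfolding e using K_pos by simp
    then show ?thesis using True K_pos by simp
  next
    case False
    then show ?thesis using Suc.prems(1) by simp
  qed
  finally show ?case by (simp add: add.assoc)
qed

lemma wo_loop:
  assumes fam: "\<And>k. k \<le> w \<Longrightarrow> okS (f k) \<and> tr K tabstr 2 (f k) = Some (if k < w then (f (k+1), 1, 0) else (t, 2, 2))"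
    and nt: "t \<noteq> Q1" and r2: "rd h = 2"
  shows "k \<le> w \<Longrightarrow> lin_exec s (Suc (w - k)) (Rc cf (encS (f k)) h ot) = Rc cf (encS t) (h + 1) (ot @ replicate (w - k) 1 @ [2])"
proof (induction "w - k" arbitrary: k ot)
  case 0
  then have "k = w" by simp
  then show ?case using step1[of "f k" h t 2 2 0 ot] fam[of k] r2 nt by (simp add: move_def)
next
  case (Suc n)
  have ok: "okS (f k)" using fam Suc.prems by blast
  have kw: "k < w" using Suc.hyps(2) by simp
  have nq: "f (k+1) \<noteq> Q1" using fam[of "k+1"] kw by (auto simp: okS_def)
  have e: "w - k = Suc (w - (k+1))" using kw by simp
  have t: "tr K tabstr (rd h) (f k) = Some (f (k+1), 1, 0)" using fam[OF Suc.prems] kw r2 by simp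
  have "lin_exec s (Suc (Suc (w - (k+1)))) (Rc cf (encS (f k)) h ot) = lin_exec s (Suc (w - (k+1))) (Rc cf (encS (f (k+1))) h (ot @ [1]))"
    using step1[OF ok t nq] by (simp add: move_def del: lin_exec.simps)
  also have "\<dots> = Rc cf (encS t) (h + 1) ((ot @ [1]) @ replicate (w - (k+1)) 1 @ [2])"
    using Suc.hyps(1)[of "k+1" "ot @ [1]"] Suc.hyps(2) kw by simp
  finally show ?case unfolding e by simp
qed

end



definition reach :: "(nat \<Rightarrow> nat) \<Rightarrow> lin_cfg \<Rightarrow> lin_cfg \<Rightarrow> bool" where
  "reach s A B \<longleftrightarrow> (\<exists>n. lin_exec s n A = B)"

lemma reachI: "lin_exec s n A = B \<Longrightarrow> reach s A B"
  unfolding reach_def by blast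

lemma reach_trans[trans]: "reach s A B \<Longrightarrow> reach s B C \<Longrightarrow> reach s A C"
  unfolding reach_def by (metis lin_exec_add)

lemma reach_refl: "reach s A A"
  by (rule reachI[of _ 0]) simp

lemma set_enc_num: "set (enc_num n) \<subseteq> {1,2}"
  by (auto simp: enc_num_def)

lemma set_enc_tuple: "set (enc_tuple t) \<subseteq> {1,2}"
  by (cases t) (auto simp: enc_num_def)

lemma set_concat_enc: "set (concat (map enc_tuple ts)) \<subseteq> {1,2}"
proof
  fix x assume "x \<in> set (concat (map enc_tuple ts))"
  then obtain t where "x \<in> set (enc_tuple t)" by auto
  then show "x \<in> {1,2}" using set_enc_tuple by blast
qed

lemma enc_num_nth: "i < n \<Longrightarrow> enc_num n ! i = 1" "enc_num n ! n = 2" "length (enc_num n) = Suc n"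
  by (auto simp: enc_num_def nth_append)

context run begin

lemma stepR:
  assumes "okS r" "tr K tabstr (rd h) r = Some (r', b, d)" "r' \<noteq> Q1"
  shows "reach s (Rc cf (encS r) h ot) (Rc cf (encS r') (move d h) (if b = 0 then ot else ot @ [b]))"
proof -
  have "lin_exec s (Suc 0) (Rc cf (encS r) h ot) = Rc cf (encS r') (move d h) (if b = 0 then ot else ot @ [b])"
    using step1[OF assms, of 0 ot] by (simp only: lin_exec.simps(1))
  then show ?thesis by (rule reachI)
qed

lemma field:
  assumes ok: "okS r" and t1: "tr K tabstr 1 r = Some (r, b, 2)" and t2: "tr K tabstr 2 r = Some (r', c, 2)"
    and nq: "r' \<noteq> Q1" and c: "code cf = pre @ enc_num n @ post"
  shows "reach s (Rc cf (encS r) (int (length pre)) ot)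
     (Rc cf (encS r') (int (length (pre @ enc_num n))) (ot @ (if b = 0 then [] else replicate n b) @ (if c = 0 then [] else [c])))"
proof -
  have ones: "\<forall>i<n. rd (int (length pre) + int i) = 1"
    using read_app[of _ "enc_num n" pre post] enc_num_nth by (simp add: c)
  have two: "rd (int (length pre) + int n) = 2"
    using read_app[of n "enc_num n" pre post] enc_num_nth by (simp add: c)
  have "reach s (Rc cf (encS r) (int (length pre)) ot) (Rc cf (encS r) (int (length pre) + int n) (ot @ (if b = 0 then [] else replicate n b)))"
    using loopR[OF ok t1 ones] by (rule reachI)
  also have "reach s \<dots> (Rc cf (encS r') (move 2 (int (length pre) + int n)) (if c = 0 then (ot @ (if b = 0 then [] else replicate n b)) else (ot @ (if b = 0 then [] else replicate n b)) @ [c]))"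
    using stepR[OF ok _ nq] t2 two by simp
  also have "Rc cf (encS r') (move 2 (int (length pre) + int n)) (if c = 0 then (ot @ (if b = 0 then [] else replicate n b)) else (ot @ (if b = 0 then [] else replicate n b)) @ [c])
     = Rc cf (encS r') (int (length (pre @ enc_num n))) (ot @ (if b = 0 then [] else replicate n b) @ (if c = 0 then [] else [c]))"
    by (cases "b = 0"; cases "c = 0") (simp_all add: move_def enc_num_nth)
  finally show ?thesis .
qed

lemma tabstr_12: "set (tabstr p' x') \<subseteq> {1,2}"
  unfolding tabstr_def by (rule set_concat_enc)

lemma writer_inner:
  assumes p: "p' \<in> PS0" "x' < K" and rh: "rd h = 1 \<or> rd h = 2"
  shows "i \<le> length (tabstr p' x') \<Longrightarrow>
    lin_exec s (Suc (length (tabstr p' x') - i)) (Rc cf (encS (Wr p' x' i)) h ot) = Rc cf (encS S0) h (ot @ drop i (tabstr p' x'))"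
proof (induction "length (tabstr p' x') - i" arbitrary: i ot)
  case 0
  then have e: "i = length (tabstr p' x')" by simp
  have ok: "okS (Wr p' x' i)" using p 0 by (simp add: okS_def)
  have t: "tr K tabstr (rd h) (Wr p' x' i) = Some (S0, 0, 0)" using rh e by (auto simp: tr_def)
  show ?case using step1[OF ok t, of 0 ot] e by (simp add: move_def)
next
  case (Suc n)
  let ?str = "tabstr p' x'"
  have il: "i < length ?str" using Suc.hyps(2) by simp
  have ok: "okS (Wr p' x' i)" using p Suc.prems by (simp add: okS_def)
  have t: "tr K tabstr (rd h) (Wr p' x' i) = Some (Wr p' x' (i+1), ?str ! i, 0)" using rh il by (auto simp: tr_def)
  have nz: "?str ! i \<noteq> 0" using tabstr_12 il nth_mem by fastforce
  have e: "length ?str - i = Suc (length ?str - (i+1))" using il by simp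
  have "lin_exec s (Suc (Suc (length ?str - (i+1)))) (Rc cf (encS (Wr p' x' i)) h ot) =
        lin_exec s (Suc (length ?str - (i+1))) (Rc cf (encS (Wr p' x' (i+1))) h (ot @ [?str ! i]))"
    using step1[OF ok t] nz by (simp add: move_def del: lin_exec.simps)
  also have "\<dots> = Rc cf (encS S0) h ((ot @ [?str ! i]) @ drop (i+1) ?str)"
    using Suc.hyps(1)[of "i+1"] Suc.hyps(2) il by simp
  finally show ?case unfolding e using il by (simp add: Cons_nth_drop_Suc)
qed

lemma writer:
  assumes p: "p' \<in> PS0" "x' < K" and rh: "rd h = 1 \<or> rd h = 2"
  shows "reach s (Rc cf (encS (Wr p' x' 0)) h ot) (Rc cf (encS S0) h (ot @ tabstr p' x'))"
proof -
  have "lin_exec s (Suc (length (tabstr p' x') - 0)) (Rc cf (encS (Wr p' x' 0)) h ot) = Rc cf (encS S0) h (ot @ drop 0 (tabstr p' x'))"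
    by (rule writer_inner[OF p rh]) simp
  then show ?thesis unfolding drop_0 by (rule reachI)
qed

lemma okS_simple[simp]: "okS S0" "okS S1" "okS Bk" "okS Bk2" "okS Cc" "okS (Sk n) \<longleftrightarrow> n \<le> 3"
  by (simp_all add: okS_def)

lemma rd_enc:
  assumes c: "code cf = pre @ enc_num n @ post"
  shows "i < n \<Longrightarrow> rd (int (length pre) + int i) = 1" "rd (int (length pre) + int n) = 2"
  using read_app[of _ "enc_num n" pre post] enc_num_nth by (simp_all add: c)

lemma rd_enc0:
  assumes c: "code cf = pre @ enc_num n @ post"
  shows "rd (int (length pre)) = (if n = 0 then 2 else 1)"
  using rd_enc(1)[OF c, of 0] rd_enc(2)[OF c] by auto

lemma skip_tuple:
  assumes c: "code cf = pre @ enc_tuple (a, 0, q', b, d) @ post"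
  shows "reach s (Rc cf (encS S0) (int (length pre)) ot) (Rc cf (encS S0) (int (length (pre @ enc_tuple (a, 0, q', b, d)))) ot)"
proof -
  let ?p1 = "pre @ enc_num a" let ?p2 = "?p1 @ enc_num 0" let ?p3 = "?p2 @ enc_num q'" let ?p4 = "?p3 @ enc_num b"
  have c1: "code cf = pre @ enc_num a @ (enc_num 0 @ enc_num q' @ enc_num b @ enc_num d @ post)" using c by simp
  have c2: "code cf = ?p1 @ enc_num 0 @ (enc_num q' @ enc_num b @ enc_num d @ post)" using c by simp
  have c3: "code cf = ?p2 @ enc_num q' @ (enc_num b @ enc_num d @ post)" using c by simp
  have c4: "code cf = ?p3 @ enc_num b @ (enc_num d @ post)" using c by simp
  have c5: "code cf = ?p4 @ enc_num d @ post" using c by simp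
  have "reach s (Rc cf (encS S0) (int (length pre)) ot) (Rc cf (encS S1) (int (length ?p1)) ot)"
    using field[OF _ _ _ _ c1, where r=S0 and b=0 and r'=S1 and c=0 and ot=ot] by (simp add: tr_def)
  also have "reach s \<dots> (Rc cf (encS (Sk 3)) (move 2 (int (length ?p1))) ot)"
    using stepR[of S1 "int (length ?p1)" "Sk 3" 0 2 ot] rd_enc0[OF c2] by (simp add: tr_def)
  also have "move 2 (int (length ?p1)) = int (length ?p2)" by (simp add: move_def enc_num_def)
  also have "reach s (Rc cf (encS (Sk 3)) (int (length ?p2)) ot) (Rc cf (encS (Sk 2)) (int (length ?p3)) ot)"
    using field[OF _ _ _ _ c3, where r="Sk 3" and b=0 and r'="Sk 2" and c=0 and ot=ot] by (simp add: tr_def)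
  also have "reach s \<dots> (Rc cf (encS (Sk 1)) (int (length ?p4)) ot)"
    using field[OF _ _ _ _ c4, where r="Sk 2" and b=0 and r'="Sk 1" and c=0 and ot=ot] by (simp add: tr_def)
  also have "reach s \<dots> (Rc cf (encS S0) (int (length (?p4 @ enc_num d))) ot)"
    using field[OF _ _ _ _ c5, where r="Sk 1" and b=0 and r'=S0 and c=0 and ot=ot] by (simp add: tr_def)
  finally show ?thesis by simp
qed

lemma skip_table:
  "\<forall>t\<in>set tus. fst (snd t) = 0 \<Longrightarrow> code cf = pre @ concat (map enc_tuple tus) @ post \<Longrightarrow>
   reach s (Rc cf (encS S0) (int (length pre)) ot) (Rc cf (encS S0) (int (length (pre @ concat (map enc_tuple tus)))) ot)"
proof (induction tus arbitrary: pre)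
  case Nil then show ?case by (simp add: reach_refl)
next
  case (Cons t tus)
  obtain a q q' b d where t: "t = (a, q, q', b, d)" by (cases t)
  have q: "q = 0" using Cons.prems t by simp
  have "reach s (Rc cf (encS S0) (int (length pre)) ot) (Rc cf (encS S0) (int (length (pre @ enc_tuple t))) ot)"
    using skip_tuple[of pre a q' b d] Cons.prems(2) t q by simp
  also have "reach s \<dots> (Rc cf (encS S0) (int (length ((pre @ enc_tuple t) @ concat (map enc_tuple tus)))) ot)"
    using Cons.IH[of "pre @ enc_tuple t"] Cons.prems by simp
  finally show ?case by simp
qed

lemma enterP:
  assumes c: "code cf = pre @ enc_tuple (a, q, q', b, d) @ post" and qo: "odd q" and pl: "pre \<noteq> []" "last pre = 2"
  shows "reach s (Rc cf (encS S0) (int (length pre)) ot) (Rc cf (encS Cc) (int (length pre)) ot)"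
proof -
  let ?p1 = "pre @ enc_num a"
  have c1: "code cf = ?p1 @ enc_num q @ (enc_num q' @ enc_num b @ enc_num d @ post)" using c by simp
  have q0: "q \<noteq> 0" using qo by (cases q) auto
  have "reach s (Rc cf (encS S0) (int (length pre)) ot) (Rc cf (encS S1) (int (length ?p1)) ot)"
    using field[of S0 0 S1 0 pre a] c by (simp add: tr_def)
  also have "reach s \<dots> (Rc cf (encS Bk) (move 1 (int (length ?p1))) ot)"
    using stepR[of S1 "int (length ?p1)" Bk 0 1 ot] rd_enc0[OF c1] q0 by (simp add: tr_def)
  also have "move 1 (int (length ?p1)) = int (length pre) + int a"
    by (simp add: move_def enc_num_def)
  also have "reach s (Rc cf (encS Bk) (int (length pre) + int a) ot) (Rc cf (encS Bk2) (move 1 (int (length pre) + int a)) ot)"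
    using stepR[of Bk "int (length pre) + int a" Bk2 0 1 ot] rd_enc(2)[of pre a] c by (simp add: tr_def)
  also have "reach s \<dots> (Rc cf (encS Bk2) (move 1 (int (length pre) + int a) - int a) ot)"
  proof (rule reachI, rule loopL)
    show "tr K tabstr 1 Bk2 = Some (Bk2, 0, 1)" by (simp add: tr_def)
    show "\<forall>i<a. rd (move 1 (int (length pre) + int a) - int i) = 1"
    proof (intro allI impI)
      fix i assume "i < a"
      then have eq: "move 1 (int (length pre) + int a) - int i = int (length pre) + int (a - 1 - i)"
        by (simp add: move_def)
      have c1': "code cf = pre @ enc_num a @ (enc_num q @ enc_num q' @ enc_num b @ enc_num d @ post)" using c by simp
      have "rd (int (length pre) + int (a - 1 - i)) = 1" by (rule rd_enc(1)[OF c1']) (use \<open>i < a\<close> in simp)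
      then show "rd (move 1 (int (length pre) + int a) - int i) = 1" unfolding eq .
    qed
  qed simp
  also have "move 1 (int (length pre) + int a) - int a = int (length pre) - 1" by (simp add: move_def)
  also have "reach s (Rc cf (encS Bk2) (int (length pre) - 1) ot) (Rc cf (encS Cc) (move 2 (int (length pre) - 1)) ot)"
  proof -
    have "rd (int (length pre) - 1) = 2"
    proof -
      have e: "int (length pre) - 1 = int (length pre - 1)" using pl by (simp add: of_nat_diff Suc_le_eq)
      have v: "code cf ! (length pre - 1) = 2" using pl c by (simp add: nth_append last_conv_nth)
      have lt: "length pre - 1 < length (code cf)" using pl c by (cases pre) auto
      show ?thesis unfolding e read_tape_def using lt v by simp
    qed
    then show ?thesis using stepR[of Bk2 "int (length pre) - 1" Cc 0 2 ot] by (simp add: tr_def)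
  qed
  finally show ?thesis by (simp add: move_def)
qed

lemma copy_rest:
  "set u \<subseteq> {1,2} \<Longrightarrow> code cf = pre @ u \<Longrightarrow>
   lin_exec s (length u) (Rc cf (encS Cc) (int (length pre)) ot) = Rc cf (encS Cc) (int (length pre) + int (length u)) (ot @ u)"
proof (induction u arbitrary: pre ot)
  case Nil then show ?case by simp
next
  case (Cons c u)
  have c12: "c = 1 \<or> c = 2" using Cons.prems by auto
  have r: "rd (int (length pre)) = c" using read_app[of 0 "[c]" pre u] Cons.prems by simp
  have t: "tr K tabstr (rd (int (length pre))) Cc = Some (Cc, c, 2)" using r c12 by (auto simp: tr_def)
  have mv: "move 2 (int (length pre)) = int (length (pre @ [c]))" by (simp add: move_def)
  have "lin_exec s (Suc (length u)) (Rc cf (encS Cc) (int (length pre)) ot) =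
        lin_exec s (length u) (Rc cf (encS Cc) (move 2 (int (length pre))) (if c = 0 then ot else ot @ [c]))"
    using step1[OF _ t, of "length u" ot] c12 by (auto simp del: lin_exec.simps)
  also have "\<dots> = lin_exec s (length u) (Rc cf (encS Cc) (int (length (pre @ [c]))) (ot @ [c]))"
    using c12 mv by auto
  also have "\<dots> = Rc cf (encS Cc) (int (length (pre @ [c])) + int (length u)) ((ot @ [c]) @ u)"
    using Cons.IH[of "pre @ [c]" "ot @ [c]"] Cons.prems by simp
  finally show ?case by simp
qed

lemma finish:
  assumes pc: "proper_code ot"
  shows "lin_step s (Rc cf (encS Cc) (int (length (code cf))) ot) = Some (cf\<lparr>code := ot, st := 0, hpos := 0, otape := []\<rparr>)"
proof -
  have "delta_of (code cf) (rd (int (length (code cf))), encS Cc) = Some (1, 0, 0)"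
    by (simp add: cd delta_codeC dC_odd read_end tr_def encS_def[of Q1])
  then show ?thesis using nd encS_odd[of Cc] pc
    by (simp add: lin_step_def reproducing_def Let_def Rc_def q1_def spawn_def move_def q0_def)
qed

end



context sim begin

definition tnext :: "nat \<Rightarrow> nat \<Rightarrow> nat \<Rightarrow> nat \<Rightarrow> nat \<times> nat \<times> nat" where
  "tnext L R w d = (if d = 2 then (K * L + w, R mod K, R div K) else if d = 1 then (L div K, L mod K, K * R + w) else (L, w, R))"

end

context run begin

lemma mulP:
  assumes fam: "\<And>i. i < K \<Longrightarrow> okS (f i) \<and> tr K tabstr 1 (f i) = Some (if i+1 < K then (f (i+1), 1, 0) else (f 0, 1, 2))"
    and c: "code cf = pre @ enc_num m @ post"
  shows "reach s (Rc cf (encS (f 0)) (int (length pre)) ot) (Rc cf (encS (f 0)) (int (length pre) + int m) (ot @ replicate (K * m) 1))"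
  using mul_loop[OF fam, of m "int (length pre)" ot] rd_enc(1)[OF c] by (intro reachI) blast

lemma divP:
  assumes fam: "\<And>j. j < K \<Longrightarrow> okS (g j) \<and> tr K tabstr 1 (g j) = Some (g ((j+1) mod K), if j+1 = K then 1 else 0, 2)"
    and c: "code cf = pre @ enc_num m @ post"
  shows "reach s (Rc cf (encS (g 0)) (int (length pre)) ot) (Rc cf (encS (g (m mod K))) (int (length pre) + int m) (ot @ replicate (m div K) 1))"
  using div_loop[OF fam, of 0 m "int (length pre)" ot] rd_enc(1)[OF c] K_pos by (intro reachI) simp

lemma woP:
  assumes fam: "\<And>k. k \<le> w \<Longrightarrow> okS (f k) \<and> tr K tabstr 2 (f k) = Some (if k < w then (f (k+1), 1, 0) else (t, 2, 2))"
    and nt: "t \<noteq> Q1" and c: "code cf = pre @ enc_num m @ post"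
  shows "reach s (Rc cf (encS (f 0)) (int (length pre) + int m) ot) (Rc cf (encS t) (int (length (pre @ enc_num m))) (ot @ replicate w 1 @ [2]))"
proof -
  have e1: "int (length pre) + int m + 1 = int (length (pre @ enc_num m))" by (simp add: enc_num_def)
  from wo_loop[OF fam nt rd_enc(2)[OF c] le0, of ot]
  have "lin_exec s (Suc w) (Rc cf (encS (f 0)) (int (length pre) + int m) ot) = Rc cf (encS t) (int (length (pre @ enc_num m))) (ot @ replicate w 1 @ [2])"
    unfolding e1 diff_zero .
  then show ?thesis by (rule reachI)
qed

lemma phase_right:
  assumes p: "p' \<in> PS0" "w < K" and c: "code cf = enc_num L @ enc_num 2 @ enc_num R @ enc_num 0 @ enc_num 0 @ rest"
  shows "reach s (Rc cf (encS (MulL 0 p' w)) 0 []) (Rc cf (encS (Wr p' (R mod K) 0)) (int (length (enc_num L @ enc_num 2 @ enc_num R @ enc_num 0 @ enc_num 0))) (enc_tuple (K*L+w, 2, R div K, 0, 0)))"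
proof -
  let ?p1 = "enc_num L" let ?p2 = "?p1 @ enc_num 2" let ?p3 = "?p2 @ enc_num R" let ?p4 = "?p3 @ enc_num 0"
  have c1: "code cf = [] @ enc_num L @ (enc_num 2 @ enc_num R @ enc_num 0 @ enc_num 0 @ rest)" using c by simp
  have c2: "code cf = ?p1 @ enc_num 2 @ (enc_num R @ enc_num 0 @ enc_num 0 @ rest)" using c by simp
  have c3: "code cf = ?p2 @ enc_num R @ (enc_num 0 @ enc_num 0 @ rest)" using c by simp
  have c4: "code cf = ?p3 @ enc_num 0 @ (enc_num 0 @ rest)" using c by simp
  have c5: "code cf = ?p4 @ enc_num 0 @ rest" using c by simp
  let ?o1 = "replicate (K * L) 1"
  let ?o2 = "?o1 @ replicate w 1 @ [2]"
  let ?o3 = "?o2 @ replicate 2 1 @ [2]"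
  let ?o4 = "?o3 @ replicate (R div K) 1"
  let ?o5 = "?o4 @ [2]"
  let ?o6 = "?o5 @ [2]"
  let ?o7 = "?o6 @ [2]"
  have "reach s (Rc cf (encS (MulL 0 p' w)) 0 []) (Rc cf (encS (MulL 0 p' w)) (int L) ?o1)"
    using mulP[where f="\<lambda>i. MulL i p' w" and ot="[]", OF _ c1] p by (simp add: okS_def tr_def)
  also have "reach s \<dots> (Rc cf (encS (WoL 0 p' w)) (int L) ?o1)"
    using stepR[of "MulL 0 p' w" "int L" "WoL 0 p' w" 0 0 ?o1] rd_enc(2)[OF c1] p K_pos
    by (simp add: okS_def tr_def move_def)
  also have "reach s \<dots> (Rc cf (encS (CpQR p')) (int (length ?p1)) ?o2)"
    using woP[where f="\<lambda>k. WoL k p' w" and t="CpQR p'" and ot="?o1", OF _ _ c1] p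
    by (simp add: okS_def tr_def)
  also have "reach s \<dots> (Rc cf (encS (DivR 0 p')) (int (length ?p2)) ?o3)"
    using field[OF _ _ _ _ c2, where r="CpQR p'" and b=1 and r'="DivR 0 p'" and c=2 and ot="?o2"] p
    by (simp add: okS_def tr_def)
  also have "reach s \<dots> (Rc cf (encS (DivR (R mod K) p')) (int (length ?p2) + int R) ?o4)"
    using divP[where g="\<lambda>j. DivR j p'" and ot="?o3", OF _ c3] p by (simp add: okS_def tr_def)
  also have "reach s \<dots> (Rc cf (encS (Cp 2 p' (R mod K))) (int (length ?p3)) ?o5)"
    using stepR[of "DivR (R mod K) p'" "int (length ?p2) + int R" "Cp 2 p' (R mod K)" 2 2 ?o4] rd_enc(2)[OF c3] p K_pos enc_num_nth(3)[of R]
    by (simp add: okS_def tr_def move_def ac_simps)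
  also have "reach s \<dots> (Rc cf (encS (Cp 1 p' (R mod K))) (int (length ?p4)) ?o6)"
    using field[OF _ _ _ _ c4, where r="Cp 2 p' (R mod K)" and b=1 and r'="Cp 1 p' (R mod K)" and c=2 and ot="?o5"] p K_pos
    by (simp add: okS_def tr_def)
  also have "reach s \<dots> (Rc cf (encS (Wr p' (R mod K) 0)) (int (length (?p4 @ enc_num 0))) ?o7)"
    using field[OF _ _ _ _ c5, where r="Cp 1 p' (R mod K)" and b=1 and r'="Wr p' (R mod K) 0" and c=2 and ot="?o6"] p K_pos
    by (simp add: okS_def tr_def)
  finally show ?thesis by (simp add: enc_num_def replicate_add numeral_2_eq_2)
qed

lemma phase_left:
  assumes p: "p' \<in> PS0" "w < K" and c: "code cf = enc_num L @ enc_num 2 @ enc_num R @ enc_num 0 @ enc_num 0 @ rest"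
  shows "reach s (Rc cf (encS (DivL 0 p' w)) 0 []) (Rc cf (encS (Wr p' (L mod K) 0)) (int (length (enc_num L @ enc_num 2 @ enc_num R @ enc_num 0 @ enc_num 0))) (enc_tuple (L div K, 2, K * R + w, 0, 0)))"
proof -
  let ?p1 = "enc_num L" let ?p2 = "?p1 @ enc_num 2" let ?p3 = "?p2 @ enc_num R" let ?p4 = "?p3 @ enc_num 0"
  let ?j = "L mod K"
  have c1: "code cf = [] @ enc_num L @ (enc_num 2 @ enc_num R @ enc_num 0 @ enc_num 0 @ rest)" using c by simp
  have c2: "code cf = ?p1 @ enc_num 2 @ (enc_num R @ enc_num 0 @ enc_num 0 @ rest)" using c by simp
  have c3: "code cf = ?p2 @ enc_num R @ (enc_num 0 @ enc_num 0 @ rest)" using c by simp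
  have c4: "code cf = ?p3 @ enc_num 0 @ (enc_num 0 @ rest)" using c by simp
  have c5: "code cf = ?p4 @ enc_num 0 @ rest" using c by simp
  have jK: "?j < K" using K_pos by simp
  let ?o1 = "replicate (L div K) 1"
  let ?o2 = "?o1 @ [2]"
  let ?o3 = "?o2 @ replicate 2 1 @ [2]"
  let ?o4 = "?o3 @ replicate (K * R) 1"
  let ?o5 = "?o4 @ replicate w 1 @ [2]"
  let ?o6 = "?o5 @ [2]"
  let ?o7 = "?o6 @ [2]"
  have "reach s (Rc cf (encS (DivL 0 p' w)) 0 []) (Rc cf (encS (DivL ?j p' w)) (int L) ?o1)"
    using divP[where g="\<lambda>j. DivL j p' w" and ot="[]", OF _ c1] p by (simp add: okS_def tr_def)
  also have "reach s \<dots> (Rc cf (encS (CpQL p' w ?j)) (int (length ?p1)) ?o2)"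
    using stepR[of "DivL ?j p' w" "int L" "CpQL p' w ?j" 2 2 ?o1] rd_enc(2)[OF c1] p jK
    by (simp add: okS_def tr_def move_def enc_num_def ac_simps)
  also have "reach s \<dots> (Rc cf (encS (MulR 0 p' w ?j)) (int (length ?p2)) ?o3)"
    using field[OF _ _ _ _ c2, where r="CpQL p' w ?j" and b=1 and r'="MulR 0 p' w ?j" and c=2 and ot="?o2"] p jK
    by (simp add: okS_def tr_def)
  also have "reach s \<dots> (Rc cf (encS (MulR 0 p' w ?j)) (int (length ?p2) + int R) ?o4)"
    using mulP[where f="\<lambda>i. MulR i p' w ?j" and ot="?o3", OF _ c3] p jK by (simp add: okS_def tr_def)
  also have "reach s \<dots> (Rc cf (encS (WoR 0 p' w ?j)) (int (length ?p2) + int R) ?o4)"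
    using stepR[of "MulR 0 p' w ?j" "int (length ?p2) + int R" "WoR 0 p' w ?j" 0 0 ?o4] rd_enc(2)[OF c3] p jK K_pos
    by (simp add: okS_def tr_def move_def)
  also have "reach s \<dots> (Rc cf (encS (Cp 2 p' ?j)) (int (length ?p3)) ?o5)"
    using woP[where f="\<lambda>k. WoR k p' w ?j" and t="Cp 2 p' ?j" and ot="?o4", OF _ _ c3] p jK
    by (simp add: okS_def tr_def)
  also have "reach s \<dots> (Rc cf (encS (Cp 1 p' ?j)) (int (length ?p4)) ?o6)"
    using field[OF _ _ _ _ c4, where r="Cp 2 p' ?j" and b=1 and r'="Cp 1 p' ?j" and c=2 and ot="?o5"] p jK
    by (simp add: okS_def tr_def)
  also have "reach s \<dots> (Rc cf (encS (Wr p' ?j 0)) (int (length (?p4 @ enc_num 0))) ?o7)"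
    using field[OF _ _ _ _ c5, where r="Cp 1 p' ?j" and b=1 and r'="Wr p' ?j 0" and c=2 and ot="?o6"] p jK
    by (simp add: okS_def tr_def)
  finally show ?thesis by (simp add: enc_num_def replicate_add numeral_2_eq_2)
qed

lemma phase_stay:
  assumes p: "p' \<in> PS0" "w < K" and c: "code cf = enc_num L @ enc_num 2 @ enc_num R @ enc_num 0 @ enc_num 0 @ rest"
  shows "reach s (Rc cf (encS (Cp 5 p' w)) 0 []) (Rc cf (encS (Wr p' w 0)) (int (length (enc_num L @ enc_num 2 @ enc_num R @ enc_num 0 @ enc_num 0))) (enc_tuple (L, 2, R, 0, 0)))"
proof -
  let ?p1 = "enc_num L" let ?p2 = "?p1 @ enc_num 2" let ?p3 = "?p2 @ enc_num R" let ?p4 = "?p3 @ enc_num 0"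
  have c1: "code cf = [] @ enc_num L @ (enc_num 2 @ enc_num R @ enc_num 0 @ enc_num 0 @ rest)" using c by simp
  have c2: "code cf = ?p1 @ enc_num 2 @ (enc_num R @ enc_num 0 @ enc_num 0 @ rest)" using c by simp
  have c3: "code cf = ?p2 @ enc_num R @ (enc_num 0 @ enc_num 0 @ rest)" using c by simp
  have c4: "code cf = ?p3 @ enc_num 0 @ (enc_num 0 @ rest)" using c by simp
  have c5: "code cf = ?p4 @ enc_num 0 @ rest" using c by simp
  let ?o1 = "replicate L 1 @ [2]"
  let ?o2 = "?o1 @ replicate 2 1 @ [2]"
  let ?o3 = "?o2 @ replicate R 1 @ [2]"
  let ?o4 = "?o3 @ [2]"
  let ?o5 = "?o4 @ [2]"
  have "reach s (Rc cf (encS (Cp 5 p' w)) 0 []) (Rc cf (encS (Cp 4 p' w)) (int (length ?p1)) ?o1)"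
    using field[OF _ _ _ _ c1, where r="Cp 5 p' w" and b=1 and r'="Cp 4 p' w" and c=2 and ot="[]"] p
    by (simp add: okS_def tr_def)
  also have "reach s \<dots> (Rc cf (encS (Cp 3 p' w)) (int (length ?p2)) ?o2)"
    using field[OF _ _ _ _ c2, where r="Cp 4 p' w" and b=1 and r'="Cp 3 p' w" and c=2 and ot="?o1"] p
    by (simp add: okS_def tr_def)
  also have "reach s \<dots> (Rc cf (encS (Cp 2 p' w)) (int (length ?p3)) ?o3)"
    using field[OF _ _ _ _ c3, where r="Cp 3 p' w" and b=1 and r'="Cp 2 p' w" and c=2 and ot="?o2"] p
    by (simp add: okS_def tr_def)
  also have "reach s \<dots> (Rc cf (encS (Cp 1 p' w)) (int (length ?p4)) ?o4)"
    using field[OF _ _ _ _ c4, where r="Cp 2 p' w" and b=1 and r'="Cp 1 p' w" and c=2 and ot="?o3"] p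
    by (simp add: okS_def tr_def)
  also have "reach s \<dots> (Rc cf (encS (Wr p' w 0)) (int (length (?p4 @ enc_num 0))) ?o5)"
    using field[OF _ _ _ _ c5, where r="Cp 1 p' w" and b=1 and r'="Wr p' w 0" and c=2 and ot="?o4"] p
    by (simp add: okS_def tr_def)
  finally show ?thesis by (simp add: enc_num_def numeral_2_eq_2)
qed

lemma phase:
  assumes p: "p' \<in> PS0" "w < K" and c: "code cf = enc_tuple (L,2,R,0,0) @ rest"
    and tn: "tnext L R w d = (L', x', R')"
  shows "reach s (Rc cf (encS (start p' w d)) 0 []) (Rc cf (encS (Wr p' x' 0)) (int (length (enc_tuple (L,2,R,0,0)))) (enc_tuple (L',2,R',0,0)))"
proof -
  have c': "code cf = enc_num L @ enc_num 2 @ enc_num R @ enc_num 0 @ enc_num 0 @ rest" using c by simp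
  show ?thesis
  proof (cases "d = 2")
    case True then show ?thesis using phase_right[OF p c'] tn by (simp add: start_def tnext_def)
  next
    case F2: False
    show ?thesis
    proof (cases "d = 1")
      case True then show ?thesis using phase_left[OF p c'] tn F2 by (simp add: start_def tnext_def)
    next
      case False then show ?thesis using phase_stay[OF p c'] tn F2 by (simp add: start_def tnext_def)
    qed
  qed
qed

end



lemma last_concat_enc: "last (enc_tuple t @ concat (map enc_tuple ts)) = 2"
proof (induction ts arbitrary: t)
  case Nil then show ?case by (cases t) (simp add: enc_num_def)
next
  case (Cons t' ts)
  have "enc_tuple t' @ concat (map enc_tuple ts) \<noteq> []" using enc_tuple_ne by simp
  then show ?case using Cons.IH[of t'] by simp
qed

context sim begin

lemma dP_Cc: "dP (0, encS Cc) = Some (1, 0, 0)"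
proof -
  have "encS Cc \<in> encS ` Sts" by (simp add: Sts_def okS_def)
  then show ?thesis by (simp add: dP_def inv_f_f[OF encS_inj] tr_def encS_def[of Q1])
qed

lemma Pts_cons: "\<exists>a q q' b d rest. Pts = (a, q, q', b, d) # rest \<and> odd q"
proof -
  have "(0, encS Cc, 1, 0, 0) \<in> set Pts" using Pts(2) dP_Cc by (simp add: graph_def)
  then obtain t rest where tr: "Pts = t # rest" by (cases Pts) auto
  obtain a q q' b d where t: "t = (a, q, q', b, d)" by (cases t)
  have "(a, q, q', b, d) \<in> set Pts" using tr t by simp
  then have "(a, q, q', b, d) \<in> graph dP" using Pts(2) by simp
  then have "dP (a, q) = Some (q', b, d)" by (simp add: graph_def)
  then have "odd q" using dP_dom by blast
  then show ?thesis using tr t by blast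
qed

lemma Pstr_ne: "Pstr \<noteq> []"
proof -
  obtain t rest where "Pts = t # rest" using Pts_cons by blast
  then show ?thesis using enc_tuple_ne[of t] by (simp add: Pstr_def)
qed

end

context run begin

lemma reproduce:
  assumes p: "p' \<in> PS0" "w < K" and tn: "tnext L R w d = (L', x', R')" and x': "x' < K"
  shows "reach s (Rc cf (encS (start p' w d)) 0 []) (cf\<lparr>code := codeC L' R' p' x', st := 0, hpos := 0, otape := []\<rparr>)"
proof -
  let ?T = "enc_tuple (L,2,R,0,0)"
  let ?O = "enc_tuple (L',2,R',0,0)"
  let ?pre = "?T @ tabstr p x"
  have c0: "code cf = ?T @ (tabstr p x @ Pstr)" using cd by (simp add: codeC_def)
  have "reach s (Rc cf (encS (start p' w d)) 0 []) (Rc cf (encS (Wr p' x' 0)) (int (length ?T)) ?O)"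
    by (rule phase[OF p c0 tn])
  also have "reach s \<dots> (Rc cf (encS S0) (int (length ?T)) (?O @ tabstr p' x'))"
  proof (rule writer[OF _ x'])
    show "p' \<in> PS0" by (rule p)
    have ne: "tabstr p x @ Pstr \<noteq> []" using Pstr_ne by simp
    have "rd (int (length ?T) + int 0) = (tabstr p x @ Pstr) ! 0"
      using read_app[of 0 "tabstr p x @ Pstr" ?T "[]"] ne c0 by simp
    moreover have "(tabstr p x @ Pstr) ! 0 \<in> {1,2}"
      using ne nth_mem[of 0 "tabstr p x @ Pstr"] tabstr_12[of p x] set_concat_enc[of Pts]
      by (auto simp: Pstr_def)
    ultimately show "rd (int (length ?T)) = 1 \<or> rd (int (length ?T)) = 2" by simp
  qed
  also have "reach s \<dots> (Rc cf (encS S0) (int (length ?pre)) (?O @ tabstr p' x'))"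
    using skip_table[of "tab p x" ?T Pstr] c0
    by (auto simp: tabstr_def tab_def tabent_def split: prod.splits)
  also have "reach s \<dots> (Rc cf (encS Cc) (int (length ?pre)) (?O @ tabstr p' x'))"
  proof -
    obtain a q q' b d rest where P: "Pts = (a, q, q', b, d) # rest" "odd q" using Pts_cons by blast
    have c1: "code cf = ?pre @ enc_tuple (a, q, q', b, d) @ concat (map enc_tuple rest)"
      using cd P by (simp add: codeC_def Pstr_def)
    have l: "last ?pre = 2" using last_concat_enc[of "(L,2,R,0,0)" "tab p x"] by (simp add: tabstr_def)
    have ne: "?pre \<noteq> []" by (simp add: enc_num_def)
    show ?thesis by (rule enterP[OF c1 P(2) ne l])
  qed
  also have "reach s \<dots> (Rc cf (encS Cc) (int (length (code cf))) ((?O @ tabstr p' x') @ Pstr))"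
  proof -
    have c2: "code cf = ?pre @ Pstr" using cd by (simp add: codeC_def)
    have "lin_exec s (length Pstr) (Rc cf (encS Cc) (int (length ?pre)) (?O @ tabstr p' x')) =
      Rc cf (encS Cc) (int (length ?pre) + int (length Pstr)) ((?O @ tabstr p' x') @ Pstr)"
      by (rule copy_rest[OF _ c2]) (unfold Pstr_def, rule set_concat_enc)
    moreover have "int (length ?pre) + int (length Pstr) = int (length (code cf))" using c2 by simp
    ultimately show ?thesis by (metis reachI)
  qed
  also have "reach s \<dots> (cf\<lparr>code := codeC L' R' p' x', st := 0, hpos := 0, otape := []\<rparr>)"
  proof -
    have e: "(?O @ tabstr p' x') @ Pstr = codeC L' R' p' x'" by (simp add: codeC_def)
    have "lin_exec s (Suc 0) (Rc cf (encS Cc) (int (length (code cf))) ((?O @ tabstr p' x') @ Pstr)) = cf\<lparr>code := codeC L' R' p' x', st := 0, hpos := 0, otape := []\<rparr>"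
      using finish[of "(?O @ tabstr p' x') @ Pstr"] proper_codeC unfolding e
      by (simp del: lin_exec.simps add: lin_exec_Suc_step) (simp only: lin_exec.simps(1))
    then show ?thesis by (rule reachI)
  qed
  finally show ?thesis .
qed

end



context sim begin

definition digit :: "nat \<Rightarrow> nat \<Rightarrow> nat" where "digit N k = N div K ^ k mod K"

definition tape_of :: "nat \<Rightarrow> nat \<Rightarrow> nat \<Rightarrow> int \<Rightarrow> nat" where
  "tape_of L x R i = (if i = 0 then x else if i > 0 then digit R (nat i - 1) else digit L (nat (- i) - 1))"

lemma digit_push0: "w < K \<Longrightarrow> digit (K * L + w) 0 = w"
  by (simp add: digit_def)

lemma digit_pushS: "w < K \<Longrightarrow> digit (K * L + w) (Suc k) = digit L k"
proof -
  assume w: "w < K"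
  have "(K * L + w) div K ^ Suc k = (K * L + w) div K div K ^ k"
    by (simp add: div_mult2_eq)
  also have "(K * L + w) div K = L" using w K_pos by simp
  finally show ?thesis by (simp add: digit_def)
qed

lemma digit_pop: "digit (R div K) k = digit R (Suc k)"
  by (simp add: digit_def div_mult2_eq)

lemma digit_0: "digit R 0 = R mod K"
  by (simp add: digit_def)

lemma int_cases3: "(i::int) = 0 \<or> (\<exists>k. i = int k + 1) \<or> (\<exists>k. i = - int k - 1)"
  by (cases "i \<ge> 0") (auto intro: exI[of _ "nat (i - 1)"] exI[of _ "nat (- i - 1)"])

lemma tape_of_pos: "tape_of L x R (int k + 1) = digit R k"
  by (simp add: tape_of_def nat_add_distrib)

lemma tape_of_neg: "tape_of L x R (- int k - 1) = digit L k"
proof -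
  have "nat (int k + 1) - 1 = k" by (simp add: nat_add_distrib)
  then show ?thesis by (simp add: tape_of_def algebra_simps)
qed

lemma tape_of_zero: "tape_of L x R 0 = x"
  by (simp add: tape_of_def)

lemma tape_update:
  assumes w: "w < K" and tn: "tnext L R w d = (L', x', R')" and t: "\<forall>j. tp j = tape_of L x R (j - h)"
  shows "\<forall>j. (tp(h := w)) j = tape_of L' x' R' (j - move d h)"
proof
  fix j
  have old: "tp j = tape_of L x R (j - h)" using t by blast
  consider (R2) "d = 2" | (L1) "d = 1" | (St) "d \<noteq> 1" "d \<noteq> 2" by blast
  then show "(tp(h := w)) j = tape_of L' x' R' (j - move d h)"
  proof cases
    case R2
    then have e: "L' = K * L + w" "x' = R mod K" "R' = R div K" and mv: "j - move d h = j - (h + 1)"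
      using tn by (auto simp: tnext_def move_def)
    consider (a) "j - (h+1) = 0" | (b) k where "j - (h+1) = int k + 1" | (c) k where "j - (h+1) = - int k - 1"
      using int_cases3 by blast
    then show ?thesis
    proof cases
      case a
      then have "j - h = int 0 + 1" "j \<noteq> h" by auto
      then have o: "tp j = digit R 0" using old tape_of_pos by (metis fun_upd_other)
      have n: "tape_of L' x' R' (j - move d h) = x'" using a mv tape_of_zero by metis
      show ?thesis using o n e \<open>j \<noteq> h\<close> digit_0 by simp
    next
      case (b k)
      then have jh: "j - h = int (Suc k) + 1" "j \<noteq> h" by auto
      then have o: "tp j = digit R (Suc k)" using old tape_of_pos by metis
      have n: "tape_of L' x' R' (j - move d h) = digit R' k" using b mv tape_of_pos by metis
      show ?thesis using o n e jh digit_pop by simp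
    next
      case (c k)
      have n: "tape_of L' x' R' (j - move d h) = digit L' k" using c mv tape_of_neg by metis
      show ?thesis
      proof (cases k)
        case 0
        then have "j = h" using c by simp
        then show ?thesis using n e w 0 digit_push0 by simp
      next
        case (Suc k')
        then have jh: "j - h = - int k' - 1" "j \<noteq> h" using c by auto
        then have o: "tp j = digit L k'" using old tape_of_neg by metis
        show ?thesis using o n e w Suc jh digit_pushS by simp
      qed
    qed
  next
    case L1
    then have e: "L' = L div K" "x' = L mod K" "R' = K * R + w" and mv: "j - move d h = j - (h - 1)"
      using tn by (auto simp: tnext_def move_def)
    consider (a) "j - (h - 1) = 0" | (b) k where "j - (h - 1) = int k + 1" | (c) k where "j - (h - 1) = - int k - 1"
      using int_cases3 by blast
    then show ?thesis
    proof cases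
      case a
      then have "j - h = - int 0 - 1" "j \<noteq> h" by auto
      then have o: "tp j = digit L 0" using old tape_of_neg by metis
      have n: "tape_of L' x' R' (j - move d h) = x'" using a mv tape_of_zero by metis
      show ?thesis using o n e \<open>j \<noteq> h\<close> digit_0 by simp
    next
      case (c k)
      then have jh: "j - h = - int (Suc k) - 1" "j \<noteq> h" by auto
      then have o: "tp j = digit L (Suc k)" using old tape_of_neg by metis
      have n: "tape_of L' x' R' (j - move d h) = digit L' k" using c mv tape_of_neg by metis
      show ?thesis using o n e jh digit_pop by simp
    next
      case (b k)
      have n: "tape_of L' x' R' (j - move d h) = digit R' k" using b mv tape_of_pos by metis
      show ?thesis
      proof (cases k)
        case 0
        then have "j = h" using b by simp
        then show ?thesis using n e w 0 digit_push0 by simp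
      next
        case (Suc k')
        then have jh: "j - h = int k' + 1" "j \<noteq> h" using b by auto
        then have o: "tp j = digit R k'" using old tape_of_pos by metis
        show ?thesis using o n e w Suc jh digit_pushS by simp
      qed
    qed
  next
    case St
    then have e: "L' = L" "x' = w" "R' = R" "move d h = h"
      using tn by (auto simp: tnext_def move_def)
    show ?thesis using old e by (auto simp: tape_of_def)
  qed
qed

lemma tnext_lt: "tnext L R w d = (L', x', R') \<Longrightarrow> w < K \<Longrightarrow> x' < K"
  using K_pos by (auto simp: tnext_def split: if_splits)

end



lemma step_outs: "lin_step s cf = Some cf' \<Longrightarrow> prefix (outs cf) (outs cf')"
  by (auto simp: lin_step_def Let_def spawn_def split: if_splits option.splits prod.splits)

lemma exec_outs: "prefix (outs (lin_exec s k cf)) (outs (lin_exec s (k + n) cf))"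
proof (induction n)
  case 0 then show ?case by simp
next
  case (Suc n)
  show ?case
  proof (cases "lin_step s (lin_exec s (k + n) cf)")
    case None then show ?thesis using Suc by simp
  next
    case (Some y)
    then have "prefix (outs (lin_exec s (k + n) cf)) (outs y)" by (rule step_outs)
    then show ?thesis using Suc Some by (auto intro: prefix_order.trans)
  qed
qed

lemma Rc_self: "Rc cf (st cf) (hpos cf) (otape cf) = cf"
  by (simp add: Rc_def)

context sim begin

definition corr :: "lin_cfg \<Rightarrow> itm_cfg \<Rightarrow> bool" where
  "corr cf c \<longleftrightarrow> (\<exists>L R x. code cf = codeC L R (mst c) x \<and> x < K \<and> (\<forall>j. mtape c j = tape_of L x R (j - mhead c)))
     \<and> mst c \<in> PS0 \<and> st cf = 0 \<and> hpos cf = 0 \<and> otape cf = [] \<and> \<not> dead cf \<and> ipos cf = mipos c \<and> outs cf = mouts c"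

lemma ran_PS0: "M k = Some (p', b, w, d) \<Longrightarrow> p' \<in> PS0"
proof -
  assume h: "M k = Some (p', b, w, d)"
  then have "(p', b, w, d) \<in> ran M" by (rule ranI)
  then show ?thesis unfolding PS0_def by (auto intro!: image_eqI[where x="(p', b, w, d)"])
qed

lemma ran_K: "M k = Some (p', b, w, d) \<Longrightarrow> w < K"
proof -
  assume h: "M k = Some (p', b, w, d)"
  have "(p', b, w, d) \<in> ran M" using h by (rule ranI)
  then have "w \<in> (\<lambda>(p,b,w,d). w) ` ran M" by (auto intro!: image_eqI[where x="(p', b, w, d)"])
  moreover have "finite ((\<lambda>(p,b,w,d). w) ` ran M)" using fin by (simp add: finite_ran)
  ultimately have "w \<le> Max (insert 0 ((\<lambda>(p,b,w,d). w) ` ran M))" by simp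
  then show ?thesis by (simp add: K_def)
qed

lemma start_ne: "start p w d \<noteq> Q1"
  by (simp add: start_def)

lemma sim_step:
  assumes co: "corr cf c"
  shows "(itm_step M s c = None \<and> lin_step s cf = None) \<or>
         (\<exists>c' n. itm_step M s c = Some c' \<and> lin_step s cf \<noteq> None \<and> 0 < n \<and> corr (lin_exec s n cf) c')"
proof -
  obtain L R x where cd: "code cf = codeC L R (mst c) x" and xK: "x < K" and tp: "\<forall>j. mtape c j = tape_of L x R (j - mhead c)"
    using co unfolding corr_def by blast
  have cs: "mst c \<in> PS0" "st cf = 0" "hpos cf = 0" "otape cf = []" "\<not> dead cf" "ipos cf = mipos c" "outs cf = mouts c"
    using co unfolding corr_def by auto
  let ?a = "s (mipos c)"
  have scan: "mtape c (mhead c) = x" using tp tape_of_zero by simp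
  have dl: "delta_of (code cf) (?a, 0) = tabd (mst c) x ?a" by (simp add: cd delta_codeC dC_def)
  show ?thesis
  proof (cases "M (mst c, ?a, x)")
    case None
    have "itm_step M s c = None" using None scan by (simp add: itm_step_def)
    moreover have "lin_step s cf = None" using None dl cs
      by (simp add: lin_step_def reproducing_def tabd_def Let_def)
    ultimately show ?thesis by blast
  next
    case (Some v)
    obtain p' b w d where v: "v = (p', b, w, d)" by (cases v)
    have Mv: "M (mst c, ?a, x) = Some (p', b, w, d)" using Some v by simp
    have p': "p' \<in> PS0" and wK: "w < K" using ran_PS0[OF Mv] ran_K[OF Mv] by auto
    define c' where "c' = \<lparr>mst = p', mtape = (mtape c)(mhead c := w), mhead = move d (mhead c),
               mipos = Suc (mipos c), mouts = mouts c @ [b]\<rparr>"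
    have ist: "itm_step M s c = Some c'" using Mv scan by (simp add: itm_step_def c'_def)
    define cf1 where "cf1 = cf\<lparr>st := encS (start p' w d), ipos := Suc (ipos cf), outs := outs cf @ [b]\<rparr>"
    have ne1: "encS (start p' w d) \<noteq> q1" using start_ne encS_eq1 by (simp add: q1_def)
    have ls: "lin_step s cf = Some cf1" using Mv dl cs ne1
      by (simp add: lin_step_def reproducing_def tabd_def Let_def cf1_def)
    obtain L' x' R' where tn: "tnext L R w d = (L', x', R')" by (cases "tnext L R w d") auto
    have x'K: "x' < K" using tnext_lt[OF tn wK] .
    interpret rr: run M cf1 L R "mst c" x s
      by unfold_locales (auto simp: fin cf1_def cd cs)
    have cf1e: "Rc cf1 (encS (start p' w d)) 0 [] = cf1" using Rc_self[of cf1] cs by (simp add: cf1_def)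
    have "reach s cf1 (cf1\<lparr>code := codeC L' R' p' x', st := 0, hpos := 0, otape := []\<rparr>)"
      using rr.reproduce[OF p' wK tn x'K] cf1e by simp
    then obtain m where m: "lin_exec s m cf1 = cf1\<lparr>code := codeC L' R' p' x', st := 0, hpos := 0, otape := []\<rparr>"
      unfolding reach_def by blast
    have ex: "lin_exec s (Suc m) cf = cf1\<lparr>code := codeC L' R' p' x', st := 0, hpos := 0, otape := []\<rparr>"
      using lin_exec_Suc_step[OF ls] m by simp
    have "corr (lin_exec s (Suc m) cf) c'"
      unfolding corr_def ex
    proof (intro conjI)
      show "\<exists>L R x. code (cf1\<lparr>code := codeC L' R' p' x', st := 0, hpos := 0, otape := []\<rparr>) = codeC L R (mst c') x \<and>
          x < K \<and> (\<forall>j. mtape c' j = tape_of L x R (j - mhead c'))"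
        using tape_update[OF wK tn tp] x'K by (auto simp: c'_def)
    qed (use p' cs in \<open>auto simp: c'_def cf1_def\<close>)
    then show ?thesis using ist ls by blast
  qed
qed

lemma corr_init: "corr (lin_init (codeC 0 0 0 0)) itm_init"
proof -
  have "\<forall>j. mtape itm_init j = tape_of 0 0 0 (j - mhead itm_init)"
    by (simp add: itm_init_def tape_of_def digit_def)
  then show ?thesis unfolding corr_def using K_pos
    by (auto simp: PS0_def q0_def lin_init_def itm_init_def)
qed

lemma main_A:
  fixes s
  defines "Lin \<equiv> \<lambda>n. lin_exec s n (lin_init (codeC 0 0 0 0))"
  defines "Itm \<equiv> \<lambda>n. itm_exec M s n itm_init"
  shows "\<exists>m. corr (Lin m) (Itm n) \<and> (\<forall>m'\<le>m. \<exists>n'. prefix (outs (Lin m')) (mouts (Itm n'))) \<and>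
           (n \<le> m \<or> lin_step s (Lin m) = None)"
proof (induction n)
  case 0
  have "corr (Lin 0) (Itm 0)" using corr_init by (simp add: Lin_def Itm_def)
  moreover have "\<forall>m'\<le>0. \<exists>n'. prefix (outs (Lin m')) (mouts (Itm n'))"
    by (auto simp: Lin_def lin_init_def)
  ultimately show ?case by blast
next
  case (Suc n)
  then obtain m where co: "corr (Lin m) (Itm n)" and cov: "\<forall>m'\<le>m. \<exists>n'. prefix (outs (Lin m')) (mouts (Itm n'))"
    and dj: "n \<le> m \<or> lin_step s (Lin m) = None" by blast
  from sim_step[OF co, of s] show ?case
  proof
    assume h: "itm_step M s (Itm n) = None \<and> lin_step s (Lin m) = None"
    then have "Itm (Suc n) = Itm n" by (simp add: Itm_def)
    then show ?thesis using co cov h by metis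
  next
    assume "\<exists>c' k. itm_step M s (Itm n) = Some c' \<and> lin_step s (Lin m) \<noteq> None \<and> 0 < k \<and> corr (lin_exec s k (Lin m)) c'"
    then obtain c' k where st: "itm_step M s (Itm n) = Some c'" and ls: "lin_step s (Lin m) \<noteq> None" and k: "0 < k"
      and co': "corr (lin_exec s k (Lin m)) c'" by blast
    have I: "Itm (Suc n) = c'" using st by (simp add: Itm_def)
    have L: "lin_exec s k (Lin m) = Lin (m + k)" by (simp add: Lin_def lin_exec_add)
    have co2: "corr (Lin (m + k)) (Itm (Suc n))" using co' I L by simp
    have out: "outs (Lin (m + k)) = mouts (Itm (Suc n))" using co2 by (simp add: corr_def)
    have cov2: "\<forall>m'\<le>m + k. \<exists>n'. prefix (outs (Lin m')) (mouts (Itm n'))"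
    proof (intro allI impI)
      fix m' assume "m' \<le> m + k"
      show "\<exists>n'. prefix (outs (Lin m')) (mouts (Itm n'))"
      proof (cases "m' \<le> m")
        case True then show ?thesis using cov by blast
      next
        case False
        then obtain j where "m + k = m' + j" using \<open>m' \<le> m + k\<close> le_add_diff_inverse by metis
        then have "prefix (outs (Lin m')) (outs (Lin (m + k)))" using exec_outs[of s m' _ j] by (simp add: Lin_def)
        then show ?thesis using out by metis
      qed
    qed
    have "Suc n \<le> m + k" using dj ls k by auto
    then show ?thesis using co2 cov2 by blast
  qed
qed

lemma main:
  "\<exists>c. proper_code c \<and>
           (\<forall>s. same_output_stream
                  (\<lambda>n. outs (lin_exec s n (lin_init c)))
                  (\<lambda>n. mouts (itm_exec M s n itm_init)))"
proof (intro exI conjI allI)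
  show "proper_code (codeC 0 0 0 0)" by (rule proper_codeC)
  fix s
  let ?Lin = "\<lambda>n. lin_exec s n (lin_init (codeC 0 0 0 0))"
  let ?Itm = "\<lambda>n. itm_exec M s n itm_init"
  show "same_output_stream (\<lambda>n. outs (?Lin n)) (\<lambda>n. mouts (?Itm n))"
    unfolding same_output_stream_def
  proof (intro allI iffI)
    fix w assume "\<exists>n. prefix w (outs (?Lin n))"
    then obtain m' where w: "prefix w (outs (?Lin m'))" by blast
    obtain m where co: "corr (?Lin m) (?Itm m')" and cov: "\<forall>m''\<le>m. \<exists>n'. prefix (outs (?Lin m'')) (mouts (?Itm n'))"
      and dj: "m' \<le> m \<or> lin_step s (?Lin m) = None"
      using main_A[of s m'] by blast
    show "\<exists>n. prefix w (mouts (?Itm n))"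
    proof (cases "m' \<le> m")
      case True then show ?thesis using cov w by (meson prefix_order.trans)
    next
      case False
      then have stl: "lin_step s (?Lin m) = None" using dj by simp
      obtain j where mj: "m' = m + j" using False by (metis le_add_diff_inverse nat_le_linear)
      have "?Lin m' = ?Lin m" unfolding mj lin_exec_add using lin_exec_stall[OF stl] by simp
      then show ?thesis using cov w by (metis order_refl prefix_order.trans)
    qed
  next
    fix w assume "\<exists>n. prefix w (mouts (?Itm n))"
    then obtain n where w: "prefix w (mouts (?Itm n))" by blast
    obtain m where co: "corr (?Lin m) (?Itm n)" using main_A[of s n] by blast
    then have "outs (?Lin m) = mouts (?Itm n)" by (simp add: corr_def)
    then show "\<exists>n. prefix w (outs (?Lin n))" using w by metis
  qed
qed

end


theorem theorem2:
  fixes M :: itm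
  assumes "finite (dom M)"
  shows "\<exists>c. proper_code c \<and>
           (\<forall>s. same_output_stream
                  (\<lambda>n. outs (lin_exec s n (lin_init c)))
                  (\<lambda>n. mouts (itm_exec M s n itm_init)))"
proof -
  interpret sim M by unfold_locales (rule assms)
  show ?thesis by (rule main)
qed

end
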